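(* Let $X$ be a real Hilbert space and $A,B$ closed convex nonempty subsets of $X$ such that $E$ and $F$ are nonempty and bounded. Let $\{A_n\}$, $\{B_n\}$ be sequences of closed convex nonempty subsets of $X$ with $A_n\to A$ and $B_n\to B$ in the Attouch–Wets sense. Then for each $M>0$ there exist $\theta\in(0,M)$ and $n_0\in\mathbb N$ such that for every $n\ge n_0$: (i) if $b_n\in B_n$, $a_n=P_{A_n}b_n$ and $\mathrm{dist}(b_n,F)\le\theta$, then $\mathrm{dist}(a_n,E)\le 2M$; (ii) if $a_n\in A_n$, $b_{n+1}=P_{B_{n+1}}a_n$ and $\mathrm{dist}(a_n,E)\le\theta$, then $\mathrm{dist}(b_{n+1},F)\le 2M$.
   Context: $P_C$ is the metric projection onto a closed convex nonempty set $C$; $B_X$ the closed unit ball; $\mathrm{dist}(x,S)=\inf_{s\in S}\|x-s\|$, $\mathrm{dist}(S,T)=\inf_{s\in S}\mathrm{dist}(s,T)$. $E=\{a\in A:\mathrm{dist}(a,B)=\mathrm{dist}(A,B)\}$, $F=\{b\in B:\mathrm{dist}(b,A)=\mathrm{dist}(A,B)\}$. Attouch–Wets convergence: for nonempty closed $C,D$ and $N\in\mathbb N$ let $e_N(C,D)=\sup_{c\in C\cap NB_X}\mathrm{dist}(c,D)$ ($0$ if $C\cap NB_X=\emptyset$) and $h_N(C,D)=\max\{e_N(C,D),e_N(D,C)\}$; $C_j\to C$ if $\lim_j h_N(C_j,C)=0$ for every $N\in\mathbb N$. *)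

theory Defs
  imports "HOL-Analysis.Analysis"
begin

text \<open>Metric projection onto a set C (in a Hilbert space, for C closed convex nonempty,
  the minimiser exists and is unique).\<close>
definition metric_proj :: "'a::real_inner set \<Rightarrow> 'a \<Rightarrow> 'a" where
  "metric_proj C x = (SOME p. p \<in> C \<and> (\<forall>y\<in>C. dist x p \<le> dist x y))"

definition best_E :: "'a::metric_space set \<Rightarrow> 'a set \<Rightarrow> 'a set" where
  "best_E A B = {a \<in> A. infdist a B = setdist A B}"

definition aw_excess :: "nat \<Rightarrow> 'a::real_normed_vector set \<Rightarrow> 'a set \<Rightarrow> real" where
  "aw_excess N C D =
     (if C \<inter> cball 0 (real N) = {} then 0
      else Sup ((\<lambda>c. infdist c D) ` (C \<inter> cball 0 (real N))))"

definition aw_dist :: "nat \<Rightarrow> 'a::real_normed_vector set \<Rightarrow> 'a set \<Rightarrow> real" where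
  "aw_dist N C D = max (aw_excess N C D) (aw_excess N D C)"

definition aw_converges :: "(nat \<Rightarrow> 'a::real_normed_vector set) \<Rightarrow> 'a set \<Rightarrow> bool" where
  "aw_converges Cs C \<longleftrightarrow> (\<forall>N::nat. (\<lambda>j. aw_dist N (Cs j) C) \<longlonglongrightarrow> 0)"

end

theory Submission
  imports Defs
begin

lemma infdist_lessE:
  assumes "D \<noteq> {}" "infdist x D < t"
  shows "\<exists>y\<in>D. dist x y < t"
proof -
  have "bdd_below ((\<lambda>a. dist x a) ` D)" by (rule bdd_belowI[where m=0]) auto
  then show ?thesis using assms by (simp add: infdist_notempty cINF_less_iff)
qed

lemma parallelogram_real_inner:
  fixes a b :: "'a::real_inner"
  shows "norm (a + b)^2 + norm (a - b)^2 = 2 * norm a ^2 + 2 * norm b ^2"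
  by (simp add: power2_norm_eq_inner inner_add_left inner_add_right inner_diff_left inner_diff_right inner_commute)

lemma midpoint_ineq:
  fixes x p c :: "'a::real_inner"
  assumes "convex C" "p \<in> C" "c \<in> C" "\<forall>y\<in>C. dist x p \<le> dist x y"
  shows "norm (c - p)^2 \<le> 2 * (dist x c ^2 - dist x p ^2)"
proof -
  let ?m = "(1/2) *\<^sub>R c + (1/2) *\<^sub>R p"
  have "?m \<in> C" using assms(1-3) by (simp add: convexD)
  then have h: "dist x p \<le> dist x ?m" using assms(4) by blast
  have e1: "(x - c) + (x - p) = 2 *\<^sub>R (x - ?m)" by (simp add: algebra_simps scaleR_2)
  have e2: "(x - c) - (x - p) = p - c" by simp
  have "norm ((x - c) + (x - p))^2 + norm ((x - c) - (x - p))^2 = 2 * norm (x - c)^2 + 2 * norm (x-p)^2"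
    by (rule parallelogram_real_inner)
  then have "4 * norm (x - ?m)^2 + norm (p - c)^2 = 2 * norm (x - c)^2 + 2 * norm (x-p)^2"
    unfolding e1 e2 by (simp add: power_mult_distrib)
  moreover have "norm (x-p)^2 \<le> norm (x - ?m)^2" using h
    by (simp add: dist_norm power_mono)
  ultimately have "norm (p - c)^2 \<le> 2*norm(x-c)^2 - 2*norm(x-p)^2" by linarith
  then show ?thesis by (simp add: dist_norm norm_minus_commute[of p c])
qed

lemma proj_exists:
  fixes C :: "'a::{real_inner, complete_space} set"
  assumes "closed C" "convex C" "C \<noteq> {}"
  shows "\<exists>p\<in>C. \<forall>y\<in>C. dist x p \<le> dist x y"
proof -
  define \<delta> where "\<delta> = infdist x C"
  have d0: "0 \<le> \<delta>" unfolding \<delta>_def by (rule infdist_nonneg)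
  have "\<forall>k::nat. \<exists>y\<in>C. dist x y < \<delta> + 1 / real (Suc k)"
    using infdist_lessE[OF assms(3)] unfolding \<delta>_def by auto
  then obtain y where yC: "\<And>k. y k \<in> C" and yd: "\<And>k. dist x (y k) < \<delta> + 1 / real (Suc k)"
    by metis
  have ylow: "\<And>k. \<delta> \<le> dist x (y k)" unfolding \<delta>_def using yC infdist_le by blast
  have key: "norm (y i - y j)^2 \<le> (4*\<delta>+2) * (1 / real (Suc i) + 1 / real (Suc j))" for i j
  proof -
    let ?m = "(1/2) *\<^sub>R y i + (1/2) *\<^sub>R y j"
    have "?m \<in> C" using assms(2) yC by (simp add: convexD)
    then have h: "\<delta> \<le> norm (x - ?m)" unfolding \<delta>_def using infdist_le dist_norm by metis
    have e1: "(x - y i) + (x - y j) = 2 *\<^sub>R (x - ?m)" by (simp add: algebra_simps scaleR_2)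
    have e2: "(x - y i) - (x - y j) = y j - y i" by simp
    have "norm ((x - y i) + (x - y j))^2 + norm ((x - y i) - (x - y j))^2 = 2 * norm (x - y i)^2 + 2 * norm (x - y j)^2"
      by (rule parallelogram_real_inner)
    then have P: "4 * norm (x - ?m)^2 + norm (y j - y i)^2 = 2 * norm (x - y i)^2 + 2 * norm (x - y j)^2"
      unfolding e1 e2 by (simp add: power_mult_distrib)
    have h2: "\<delta>^2 \<le> norm (x - ?m)^2" using h d0 by (simp add: power_mono)
    define ti where "ti = 1 / real (Suc i)"
    define tj where "tj = 1 / real (Suc j)"
    have ti: "0 < ti" "ti \<le> 1" unfolding ti_def by auto
    have tj: "0 < tj" "tj \<le> 1" unfolding tj_def by auto
    have ni: "norm (x - y i)^2 \<le> (\<delta> + ti)^2" using yd[of i] ylow[of i] d0 unfolding ti_def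
      by (simp add: dist_norm power_mono)
    have nj: "norm (x - y j)^2 \<le> (\<delta> + tj)^2" using yd[of j] ylow[of j] d0 unfolding tj_def
      by (simp add: dist_norm power_mono)
    have "norm (y i - y j)^2 \<le> 2 * (\<delta> + ti)^2 + 2 * (\<delta> + tj)^2 - 4 * \<delta>^2"
      using P h2 ni nj by (simp add: norm_minus_commute)
    also have "\<dots> = 4*\<delta>*ti + 2*ti*ti + 4*\<delta>*tj + 2*tj*tj" by (simp add: power2_eq_square algebra_simps)
    also have "\<dots> \<le> (4*\<delta>+2) * (ti + tj)"
    proof -
      have a: "ti*ti \<le> ti" using ti by (simp add: mult_left_le)
      have b: "tj*tj \<le> tj" using tj by (simp add: mult_left_le)
      have "(4*\<delta>+2)*(ti+tj) = 4*\<delta>*ti + 2*ti + 4*\<delta>*tj + 2*tj" by (simp add: algebra_simps)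
      then show ?thesis using a b by linarith
    qed
    finally show ?thesis unfolding ti_def tj_def .
  qed
  have "Cauchy y"
  proof (rule metric_CauchyI)
    fix e :: real assume e: "0 < e"
    define K where "K = (4*\<delta>+2)"
    have K: "0 < K" unfolding K_def using d0 by simp
    obtain N :: nat where N: "2 * K / e^2 < real N" using reals_Archimedean2 by blast
    show "\<exists>M. \<forall>m\<ge>M. \<forall>n\<ge>M. dist (y m) (y n) < e"
    proof (intro exI allI impI)
      fix m n assume mn: "N \<le> m" "N \<le> n"
      have "1 / real (Suc m) \<le> 1 / real (Suc N)" using mn by (simp add: frac_le)
      moreover have "1 / real (Suc n) \<le> 1 / real (Suc N)" using mn by (simp add: frac_le)
      ultimately have s: "1 / real (Suc m) + 1 / real (Suc n) \<le> 2 / real (Suc N)" by simp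
      have "norm (y m - y n)^2 \<le> K * (1 / real (Suc m) + 1 / real (Suc n))"
        using key[of m n] unfolding K_def .
      also have "\<dots> \<le> K * (2 / real (Suc N))" using s K by (intro mult_left_mono) auto
      also have "\<dots> < e^2"
      proof -
        have "2 * K / e^2 < real (Suc N)" using N by simp
        then have "2 * K < e^2 * real (Suc N)" using e by (simp add: field_simps)
        then show ?thesis by (simp add: field_simps)
      qed
      finally have "norm (y m - y n)^2 < e^2" .
      then show "dist (y m) (y n) < e" using e
        by (simp add: dist_norm power_less_imp_less_base)
    qed
  qed
  then obtain p where yp: "y \<longlonglongrightarrow> p" using Cauchy_convergent_iff convergent_def by blast
  have pC: "p \<in> C" using closed_sequentially[OF assms(1) _ yp] yC by blast
  have t1: "(\<lambda>k. dist x (y k)) \<longlonglongrightarrow> dist x p" using yp by (intro tendsto_intros)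
  have t2: "(\<lambda>k. dist x (y k)) \<longlonglongrightarrow> \<delta>"
  proof (rule real_tendsto_sandwich[where f="\<lambda>_. \<delta>" and h="\<lambda>k. \<delta> + 1 / real (Suc k)"])
    show "\<forall>\<^sub>F n in sequentially. \<delta> \<le> dist x (y n)" using ylow by simp
    show "\<forall>\<^sub>F n in sequentially. dist x (y n) \<le> \<delta> + 1 / real (Suc n)" using yd less_imp_le by (intro always_eventually allI) blast
    show "(\<lambda>n. \<delta>) \<longlonglongrightarrow> \<delta>" by simp
    show "(\<lambda>n. \<delta> + 1 / real (Suc n)) \<longlonglongrightarrow> \<delta>"
      using tendsto_add[OF tendsto_const[of \<delta>] LIMSEQ_inverse_real_of_nat] by (simp add: inverse_eq_divide)
  qed
  have "dist x p = \<delta>" using LIMSEQ_unique[OF t1 t2] .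
  then show ?thesis using pC infdist_le unfolding \<delta>_def by metis
qed

lemma metric_proj:
  fixes C :: "'a::{real_inner, complete_space} set"
  assumes "closed C" "convex C" "C \<noteq> {}"
  shows "metric_proj C x \<in> C" "\<forall>y\<in>C. dist x (metric_proj C x) \<le> dist x y"
proof -
  have "\<exists>p. p \<in> C \<and> (\<forall>y\<in>C. dist x p \<le> dist x y)" using proj_exists[OF assms] by blast
  then have "metric_proj C x \<in> C \<and> (\<forall>y\<in>C. dist x (metric_proj C x) \<le> dist x y)"
    unfolding metric_proj_def by (rule someI_ex)
  then show "metric_proj C x \<in> C" "\<forall>y\<in>C. dist x (metric_proj C x) \<le> dist x y" by auto
qed

lemma sq_bound:
  fixes u v dd ss :: real
  assumes "0 \<le> dd" "0 < ss" "0 \<le> v" "0 \<le> u" "u \<le> dd + ss" "dd - ss \<le> v"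
  shows "u^2 - v^2 \<le> 4 * dd * ss + ss^2"
proof -
  have u2: "u^2 \<le> (dd + ss)^2" using assms by (simp add: power_mono)
  show ?thesis
  proof (cases "ss \<le> dd")
    case True
    then have "(dd - ss)^2 \<le> v^2" using assms by (simp add: power_mono)
    moreover have "(dd + ss)^2 - (dd - ss)^2 = 4 * dd * ss" by (simp add: power2_eq_square algebra_simps)
    moreover have "0 \<le> ss^2" by simp
    ultimately show ?thesis using u2 by linarith
  next
    case False
    have "dd * dd \<le> dd * ss" using False assms(1) by (simp add: mult_left_mono)
    moreover have "(dd + ss)^2 = dd * dd + 2 * dd * ss + ss^2" by (simp add: power2_eq_square algebra_simps)
    moreover have "0 \<le> v^2" by simp
    moreover have "0 \<le> dd * ss" using assms by simp
    ultimately show ?thesis using u2 by linarith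
  qed
qed

lemma infdist_le_aw:
  fixes x :: "'a::real_normed_vector"
  assumes "x \<in> C" "norm x \<le> real N" "D \<noteq> {}"
  shows "infdist x D \<le> aw_dist N C D"
proof -
  obtain d0 where d0: "d0 \<in> D" using assms(3) by blast
  have ne: "C \<inter> cball 0 (real N) \<noteq> {}" using assms by auto
  have bdd: "bdd_above ((\<lambda>c. infdist c D) ` (C \<inter> cball 0 (real N)))"
  proof (rule bdd_aboveI[where M="real N + norm d0"])
    fix y assume "y \<in> (\<lambda>c. infdist c D) ` (C \<inter> cball 0 (real N))"
    then obtain c where c: "c \<in> C \<inter> cball 0 (real N)" "y = infdist c D" by blast
    have "infdist c D \<le> dist c d0" using d0 by (rule infdist_le)
    also have "\<dots> \<le> norm c + norm d0" by (simp add: dist_norm norm_triangle_ineq4)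
    also have "\<dots> \<le> real N + norm d0" using c by simp
    finally show "y \<le> real N + norm d0" using c by simp
  qed
  have "infdist x D \<le> aw_excess N C D"
    unfolding aw_excess_def using ne assms by (auto intro!: cSup_upper bdd)
  then show ?thesis unfolding aw_dist_def by simp
qed

lemma infdist_attained:
  assumes "p \<in> C" "\<forall>y\<in>C. dist x p \<le> dist x y"
  shows "dist x p = infdist x C"
proof -
  have ne: "C \<noteq> {}" using assms by auto
  have "dist x p \<le> infdist x C"
    unfolding infdist_notempty[OF ne] using assms ne by (intro cINF_greatest) auto
  then show ?thesis using infdist_le[OF assms(1), of x] by linarith
qed

lemma main_lemma:
  fixes A B :: "'a::{real_inner, complete_space} set"
    and Cn :: "nat \<Rightarrow> 'a set"
  assumes A: "closed A" "convex A" "A \<noteq> {}"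
    and F: "best_E B A \<noteq> {}" "bounded (best_E B A)"
    and Cn: "\<And>n. closed (Cn n) \<and> convex (Cn n) \<and> Cn n \<noteq> {}"
    and conv: "aw_converges Cn A"
    and M: "0 < M"
  shows "\<exists>\<theta> n0. 0 < \<theta> \<and> \<theta> < M \<and>
           (\<forall>n\<ge>n0. \<forall>b. infdist b (best_E B A) \<le> \<theta> \<longrightarrow>
                  infdist (metric_proj (Cn n) b) (best_E A B) \<le> 2 * M)"
proof -
  define d where "d = setdist B A"
  have d0: "0 \<le> d" unfolding d_def by simp
  obtain R where R: "\<And>f. f \<in> best_E B A \<Longrightarrow> norm f \<le> R"
    using F(2) unfolding bounded_iff by blast
  define s where "s = min (M/2) (M^2 / (4 * (8 * d + M)))"
  have dm: "0 < 8 * d + M" using d0 M by simp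
  have s0: "0 < s" unfolding s_def using M dm by simp
  have s1: "s \<le> M/2" unfolding s_def by (rule min.cobounded1)
  have s2: "s * (8 * d + M) \<le> M^2 / 4"
  proof -
    have "s \<le> M^2 / (4 * (8 * d + M))" unfolding s_def by (rule min.cobounded2)
    then show ?thesis using dm by (simp add: field_simps)
  qed
  define \<theta> where "\<theta> = s / 4"
  define \<eta> where "\<eta> = s / 8"
  define N where "N = nat \<lceil>R + d + 2 * s\<rceil>"
  have N: "R + d + 2 * s \<le> real N" unfolding N_def by linarith
  have "(\<lambda>j. aw_dist N (Cn j) A) \<longlonglongrightarrow> 0" using conv unfolding aw_converges_def by blast
  then obtain n0 where n0: "\<And>n. n \<ge> n0 \<Longrightarrow> norm (aw_dist N (Cn n) A - 0) < \<eta>"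
    using LIMSEQ_D[of _ 0 \<eta>] s0 unfolding \<eta>_def by (metis divide_pos_pos zero_less_numeral)
  have aw: "aw_dist N (Cn n) A < \<eta>" if "n \<ge> n0" for n using n0[OF that] by simp
  have aw2: "aw_dist N A (Cn n) = aw_dist N (Cn n) A" for n unfolding aw_dist_def by simp
  show ?thesis
  proof (intro exI conjI allI impI)
    show "0 < \<theta>" "\<theta> < M" unfolding \<theta>_def using s0 s1 M by auto
    fix n b assume n: "n0 \<le> n" and b: "infdist b (best_E B A) \<le> \<theta>"
    have CnP: "closed (Cn n)" "convex (Cn n)" "Cn n \<noteq> {}" using Cn by auto
    obtain f where f: "f \<in> best_E B A" "dist b f < s / 2"
      using infdist_lessE[OF F(1), of b "s/2"] b s0 unfolding \<theta>_def by auto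
    have fB: "f \<in> B" and fd: "infdist f A = d" using f(1) unfolding best_E_def d_def by auto
    define e where "e = metric_proj A f"
    have eA: "e \<in> A" and emin: "\<forall>y\<in>A. dist f e \<le> dist f y"
      using metric_proj[OF A, of f] unfolding e_def by auto
    have fe: "dist f e = d" using infdist_attained[OF eA emin] fd by simp
    have eE: "e \<in> best_E A B"
    proof -
      have "infdist e B \<le> dist e f" using fB by (rule infdist_le)
      then have "infdist e B \<le> setdist A B" using fe unfolding d_def by (simp add: dist_commute setdist_sym)
      moreover have "setdist A B \<le> infdist e B" using eA by (simp add: infdist_eq_setdist setdist_le_sing)
      ultimately show ?thesis using eA unfolding best_E_def by auto
    qed
    have ne: "norm e \<le> R + d"
    proof -
      have "norm e \<le> norm f + dist f e" using norm_triangle_sub[of e f] by (simp add: dist_norm norm_minus_commute)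
      then show ?thesis using R[OF f(1)] fe by simp
    qed
    have "infdist e (Cn n) \<le> aw_dist N A (Cn n)"
      using infdist_le_aw[OF eA _ CnP(3)] ne N s0 by simp
    then have "infdist e (Cn n) < \<eta>" using aw[OF n] aw2 by simp
    then obtain c where cC: "c \<in> Cn n" and ec: "dist e c < \<eta>" using infdist_lessE[OF CnP(3)] by blast
    define q where "q = metric_proj (Cn n) b"
    have qC: "q \<in> Cn n" and qmin: "\<forall>y\<in>Cn n. dist b q \<le> dist b y"
      using metric_proj[OF CnP, of b] unfolding q_def by auto
    have bc: "dist b c \<le> d + s"
    proof -
      have "dist b c \<le> dist b f + dist f e + dist e c" using dist_triangle[of b c f] dist_triangle[of f c e] by linarith
      then show ?thesis using f(2) fe ec s0 unfolding \<eta>_def by linarith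
    qed
    have bq: "dist b q \<le> dist b c" using qmin cC by blast
    have nb: "norm b \<le> R + s / 2"
    proof -
      have "norm b \<le> norm f + dist b f" using norm_triangle_sub[of b f] by (simp add: dist_norm)
      then show ?thesis using R[OF f(1)] f(2) by simp
    qed
    have nq: "norm q \<le> real N"
    proof -
      have "norm q \<le> norm b + dist b q" using norm_triangle_sub[of q b] by (simp add: dist_norm norm_minus_commute)
      then show ?thesis using nb bq bc N s0 by linarith
    qed
    have "infdist q A \<le> aw_dist N (Cn n) A" using infdist_le_aw[OF qC nq A(3)] .
    then have "infdist q A < \<eta>" using aw[OF n] by simp
    then obtain a' where a'A: "a' \<in> A" and qa: "dist q a' < \<eta>" using infdist_lessE[OF A(3)] by blast
    have "infdist f A \<le> infdist b A + dist f b" by (rule infdist_triangle)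
    moreover have "infdist b A \<le> dist b a'" using a'A by (rule infdist_le)
    moreover have "dist b a' \<le> dist b q + dist q a'" by (rule dist_triangle)
    ultimately have bq2: "d - s \<le> dist b q" using fd f(2) qa s0 dist_commute[of f b] unfolding \<eta>_def by linarith
    have "norm (c - q)^2 \<le> 2 * (dist b c ^2 - dist b q ^2)"
      using midpoint_ineq[OF CnP(2) qC cC qmin] .
    also have "\<dots> \<le> 2 * (4 * d * s + s^2)"
      using sq_bound[OF d0 s0 zero_le_dist zero_le_dist bc bq2] by (rule mult_left_mono) simp
    also have "\<dots> \<le> s * (8 * d + M)"
    proof -
      have "s * s \<le> s * (M/2)" using s0 s1 by (simp add: mult_left_mono)
      moreover have "2 * (4 * d * s + s^2) = 8 * d * s + 2 * (s * s)" by (simp add: power2_eq_square)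
      moreover have "s * (8 * d + M) = 8 * d * s + s * M" by (simp add: algebra_simps)
      ultimately show ?thesis by linarith
    qed
    also have "\<dots> \<le> (M/2)^2"
    proof -
      have "(M/2)^2 = M^2/4" by (simp add: power_divide)
      then show ?thesis using s2 by linarith
    qed
    finally have sq: "norm (c - q)^2 \<le> (M/2)^2" .
    have "0 \<le> M/2" using M by simp
    with sq have "norm (c - q) \<le> M/2" by (rule power2_le_imp_le)
    have "infdist q (best_E A B) \<le> dist q e" using eE by (rule infdist_le)
    also have "\<dots> \<le> dist q c + dist c e" by (rule dist_triangle)
    also have "\<dots> \<le> M/2 + \<eta>"
    proof -
      have "dist q c = norm (c - q)" by (simp add: dist_norm norm_minus_commute)
      moreover have "dist c e = dist e c" by (rule dist_commute)
      ultimately show ?thesis using \<open>norm (c - q) \<le> M/2\<close> ec by linarith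
    qed
    also have "\<dots> \<le> 2 * M" using s1 M unfolding \<eta>_def by linarith
    finally show "infdist (metric_proj (Cn n) b) (best_E A B) \<le> 2 * M" unfolding q_def .
  qed
qed

theorem proposition4p9:
  fixes A B :: "'a::{real_inner, complete_space} set"
    and An Bn :: "nat \<Rightarrow> 'a set"
  assumes "closed A" "convex A" "A \<noteq> {}"
    and "closed B" "convex B" "B \<noteq> {}"
    and "best_E A B \<noteq> {}" "bounded (best_E A B)"
    and "best_E B A \<noteq> {}" "bounded (best_E B A)"
    and "\<And>n. closed (An n) \<and> convex (An n) \<and> An n \<noteq> {}"
    and "\<And>n. closed (Bn n) \<and> convex (Bn n) \<and> Bn n \<noteq> {}"
    and "aw_converges An A" "aw_converges Bn B"
  shows "\<forall>M>0. \<exists>\<theta> n0. 0 < \<theta> \<and> \<theta> < M \<and>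
           (\<forall>n\<ge>n0.
              (\<forall>b\<in>Bn n. infdist b (best_E B A) \<le> \<theta> \<longrightarrow>
                  infdist (metric_proj (An n) b) (best_E A B) \<le> 2 * M) \<and>
              (\<forall>a\<in>An n. infdist a (best_E A B) \<le> \<theta> \<longrightarrow>
                  infdist (metric_proj (Bn (Suc n)) a) (best_E B A) \<le> 2 * M))"
proof (intro allI impI)
  fix M :: real assume M: "0 < M"
  have convB: "aw_converges (\<lambda>n. Bn (Suc n)) B"
    using assms(14) unfolding aw_converges_def by (auto intro: LIMSEQ_Suc)
  obtain \<theta>1 n1 where h1: "0 < \<theta>1" "\<theta>1 < M"
    "\<forall>n\<ge>n1. \<forall>b. infdist b (best_E B A) \<le> \<theta>1 \<longrightarrow>
                  infdist (metric_proj (An n) b) (best_E A B) \<le> 2 * M"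
    using main_lemma[of A B An M] assms M by blast
  obtain \<theta>2 n2 where h2: "0 < \<theta>2" "\<theta>2 < M"
    "\<forall>n\<ge>n2. \<forall>b. infdist b (best_E A B) \<le> \<theta>2 \<longrightarrow>
                  infdist (metric_proj (Bn (Suc n)) b) (best_E B A) \<le> 2 * M"
    using main_lemma[of B A "\<lambda>n. Bn (Suc n)" M] assms M convB by blast
  show "\<exists>\<theta> n0. 0 < \<theta> \<and> \<theta> < M \<and>
           (\<forall>n\<ge>n0.
              (\<forall>b\<in>Bn n. infdist b (best_E B A) \<le> \<theta> \<longrightarrow>
                  infdist (metric_proj (An n) b) (best_E A B) \<le> 2 * M) \<and>
              (\<forall>a\<in>An n. infdist a (best_E A B) \<le> \<theta> \<longrightarrow>
                  infdist (metric_proj (Bn (Suc n)) a) (best_E B A) \<le> 2 * M))"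
  proof (intro exI[of _ "min \<theta>1 \<theta>2"] exI[of _ "max n1 n2"] conjI allI impI ballI)
    show "0 < min \<theta>1 \<theta>2" using h1 h2 by simp
    show "min \<theta>1 \<theta>2 < M" using h1 h2 by simp
    fix n assume n: "max n1 n2 \<le> n"
    fix b assume "b \<in> Bn n" "infdist b (best_E B A) \<le> min \<theta>1 \<theta>2"
    then show "infdist (metric_proj (An n) b) (best_E A B) \<le> 2 * M" using h1(3) n by auto
  next
    fix n assume n: "max n1 n2 \<le> n"
    fix a assume "a \<in> An n" "infdist a (best_E A B) \<le> min \<theta>1 \<theta>2"
    then show "infdist (metric_proj (Bn (Suc n)) a) (best_E B A) \<le> 2 * M" using h2(3) n by auto
  qed
qed

end
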